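(* Let $\alpha,\beta$ be positive integers and $\underline n=(n_1,\dots,n_d)$ a tuple of positive integers. Suppose the graph $\mathcal{G}^{\alpha,\beta}_{\underline n}$ contains a Hamiltonian cycle which contains two $\alpha$-sites and two $\beta$-sites whose supports are pairwise disjoint. Let $k\geq \alpha+\beta-1$ be an integer and $\underline m=(n_1,\dots,n_d,k)$. Then $\mathcal{G}^{\alpha,\beta}_{\underline m}$ contains a Hamiltonian cycle which contains two $\alpha$-sites and two $\beta$-sites whose supports are pairwise disjoint.
   Context: For a tuple $\underline n=(n_1,\dots,n_d)$, the board is $\mathcal{B}_{\underline n}=\{1,\dots,n_1\}\times\cdots\times\{1,\dots,n_d\}$. Let $\mathcal{C}^{\alpha,\beta}_d$ be the set of vectors in $\mathbb{Z}^d$ with exactly $d-2$ coordinates equal to $0$, exactly one coordinate in $\{\pm\alpha\}$ and exactly one coordinate in $\{\pm\beta\}$. The graph $\mathcal{G}^{\alpha,\beta}_{\underline n}$ has vertex set $\mathcal{B}_{\underline n}$ with $a,b$ adjacent iff $a-b\in\mathcal{C}^{\alpha,\beta}_d$. Let $(e_j)$ be the standard basis of $\mathbb{R}^d$. For a Hamiltonian cycle $(a^i)_{i\in I}$, $I=\{1,\dots,N\}$, indices mod $N$: a well-oriented $\alpha$-site is a quadruple $(a^n,a^{n+1},a^m,a^{m+1})$ with $n,m\in I$ such that for some $j$, $a^{n+1}-a^m=\pm(a^{m+1}-a^n)\in\{-\alpha e_j,\alpha e_j\}$; a non-well-oriented $\alpha$-site is a quadruple $(a^n,a^{n+1},a^{m+1},a^m)$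 such that for some $j$, $a^n-a^m=\pm(a^{m+1}-a^{n+1})\in\{-\alpha e_j,\alpha e_j\}$. An $\alpha$-site is either of these; $\beta$-sites are defined in the same way with $\beta$ in place of $\alpha$. The support of a site is the set $\{a^n,a^{n+1},a^m,a^{m+1}\}$. *)

theory Defs
  imports Main
begin

(* Points of Z^d are int lists of length d; a tuple n = (n_1,...,n_d) is a nat list. *)

definition board :: "nat list \<Rightarrow> int list set" where
  "board ns = {a. length a = length ns \<and>
                  (\<forall>i<length ns. 1 \<le> a ! i \<and> a ! i \<le> int (ns ! i))}"

definition vdiff :: "int list \<Rightarrow> int list \<Rightarrow> int list" where
  "vdiff a b = map2 (-) a b"

definition vscale :: "int \<Rightarrow> int list \<Rightarrow> int list" where
  "vscale s v = map ((*) s) v"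

definition unitv :: "nat \<Rightarrow> nat \<Rightarrow> int list" where
  "unitv d j = map (\<lambda>i. if i = j then 1 else 0) [0..<d]"

definition in_C :: "nat \<Rightarrow> nat \<Rightarrow> nat \<Rightarrow> int list \<Rightarrow> bool" where
  "in_C \<alpha> \<beta> d v \<longleftrightarrow> length v = d \<and>
     (\<exists>i j. i < d \<and> j < d \<and> i \<noteq> j \<and> \<bar>v ! i\<bar> = int \<alpha> \<and> \<bar>v ! j\<bar> = int \<beta> \<and>
            (\<forall>l<d. l \<noteq> i \<and> l \<noteq> j \<longrightarrow> v ! l = 0))"

definition adj :: "nat \<Rightarrow> nat \<Rightarrow> nat list \<Rightarrow> int list \<Rightarrow> int list \<Rightarrow> bool" where
  "adj \<alpha> \<beta> ns a b \<longleftrightarrow> a \<in> board ns \<and> b \<in> board ns \<and> in_C \<alpha> \<beta> (length ns) (vdiff a b)"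

definition cyc :: "'a list \<Rightarrow> nat \<Rightarrow> 'a" where
  "cyc cs i = cs ! (i mod length cs)"

definition ham_cycle :: "nat \<Rightarrow> nat \<Rightarrow> nat list \<Rightarrow> int list list \<Rightarrow> bool" where
  "ham_cycle \<alpha> \<beta> ns cs \<longleftrightarrow> length cs \<ge> 3 \<and> distinct cs \<and> set cs = board ns \<and>
     (\<forall>i<length cs. adj \<alpha> \<beta> ns (cyc cs i) (cyc cs (Suc i)))"

definition axis_mult :: "nat \<Rightarrow> nat \<Rightarrow> int list \<Rightarrow> bool" where
  "axis_mult d g v \<longleftrightarrow> (\<exists>j<d. v = vscale (int g) (unitv d j) \<or> v = vscale (- int g) (unitv d j))"

(* well-oriented g-site (a^n, a^{n+1}, a^m, a^{m+1}) *)
definition well_oriented_site :: "nat \<Rightarrow> int list list \<Rightarrow> nat \<Rightarrow> nat \<Rightarrow> bool" where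
  "well_oriented_site g cs n m \<longleftrightarrow>
     n < length cs \<and> m < length cs \<and>
     (\<exists>s\<in>{1, -1}. vdiff (cyc cs (Suc n)) (cyc cs m) = vscale s (vdiff (cyc cs (Suc m)) (cyc cs n))) \<and>
     axis_mult (length (cyc cs n)) g (vdiff (cyc cs (Suc n)) (cyc cs m))"

(* non-well-oriented g-site (a^n, a^{n+1}, a^{m+1}, a^m) *)
definition non_well_oriented_site :: "nat \<Rightarrow> int list list \<Rightarrow> nat \<Rightarrow> nat \<Rightarrow> bool" where
  "non_well_oriented_site g cs n m \<longleftrightarrow>
     n < length cs \<and> m < length cs \<and>
     (\<exists>s\<in>{1, -1}. vdiff (cyc cs n) (cyc cs m) = vscale s (vdiff (cyc cs (Suc m)) (cyc cs (Suc n)))) \<and>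
     axis_mult (length (cyc cs n)) g (vdiff (cyc cs n) (cyc cs m))"

definition is_site :: "nat \<Rightarrow> int list list \<Rightarrow> bool \<times> nat \<times> nat \<Rightarrow> bool" where
  "is_site g cs s = (case s of (w, n, m) \<Rightarrow>
      (if w then well_oriented_site g cs n m else non_well_oriented_site g cs n m))"

definition site_support :: "int list list \<Rightarrow> bool \<times> nat \<times> nat \<Rightarrow> int list set" where
  "site_support cs s = (case s of (w, n, m) \<Rightarrow>
      {cyc cs n, cyc cs (Suc n), cyc cs m, cyc cs (Suc m)})"

definition good_ham_cycle :: "nat \<Rightarrow> nat \<Rightarrow> nat list \<Rightarrow> int list list \<Rightarrow> bool" where
  "good_ham_cycle \<alpha> \<beta> ns cs \<longleftrightarrow> ham_cycle \<alpha> \<beta> ns cs \<and>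
     (\<exists>s1 s2 s3 s4. is_site \<alpha> cs s1 \<and> is_site \<alpha> cs s2 \<and> is_site \<beta> cs s3 \<and> is_site \<beta> cs s4 \<and>
        (let S = [site_support cs s1, site_support cs s2, site_support cs s3, site_support cs s4]
         in \<forall>i<4. \<forall>j<4. i \<noteq> j \<longrightarrow> S ! i \<inter> S ! j = {}))"

end

theory Submission
  imports Defs
begin

fun pe :: "'a list \<Rightarrow> 'a set set" where
  "pe (a # b # xs) = insert {a,b} (pe (b # xs))"
| "pe _ = {}"

definition ce :: "'a list \<Rightarrow> 'a set set" where
  "ce xs = insert {last xs, hd xs} (pe xs)"

lemma pe_append: "xs \<noteq> [] \<Longrightarrow> ys \<noteq> [] \<Longrightarrow> pe (xs @ ys) = pe xs \<union> pe ys \<union> {{last xs, hd ys}}"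
proof (induction xs rule: pe.induct)
  case (1 a b xs) then show ?case by auto
next
  case ("2_2" v) then show ?case by (cases ys) auto
qed auto

lemma pe_rev: "pe (rev xs) = pe xs"
proof (induction xs)
  case (Cons a xs)
  show ?case
  proof (cases xs)
    case Nil then show ?thesis by simp
  next
    case (Cons b ys)
    have "pe (rev (a#xs)) = pe (rev xs @ [a])" by simp
    also have "\<dots> = pe (rev xs) \<union> pe [a] \<union> {{last (rev xs), a}}"
      using Cons pe_append[of "rev xs" "[a]"] by simp
    also have "\<dots> = pe (a#xs)" using Cons.IH Cons by (auto simp: last_rev)
    finally show ?thesis .
  qed
qed simp

lemma ce_rev: "ce (rev xs) = ce xs"
  by (cases "xs = []") (auto simp: ce_def pe_rev last_rev hd_rev)

lemma ce_rotate1: "ce (rotate1 xs) = ce xs"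
proof (cases xs)
  case (Cons a ys)
  show ?thesis
  proof (cases ys)
    case Nil then show ?thesis using Cons by simp
  next
    case (Cons b zs)
    have "pe (ys @ [a]) = pe ys \<union> pe [a] \<union> {{last ys, a}}"
      using Cons pe_append[of ys "[a]"] by simp
    then show ?thesis using Cons \<open>xs = a # ys\<close> by (auto simp: ce_def)
  qed
qed simp

lemma ce_rotate: "ce (rotate n xs) = ce xs"
proof (induction n)
  case (Suc n)
  have "ce (rotate (Suc n) xs) = ce (rotate1 (rotate n xs))" by (simp only: rotate_Suc)
  also have "\<dots> = ce xs" by (simp only: ce_rotate1 Suc.IH)
  finally show ?case .
qed simp

lemma pe_nth_in: "Suc i < length xs \<Longrightarrow> {xs!i, xs!Suc i} \<in> pe xs"
proof (induction xs arbitrary: i rule: pe.induct)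
  case (1 a b xs) then show ?case by (cases i) auto
qed auto

lemma pe_nth_ex: "e \<in> pe xs \<Longrightarrow> \<exists>i. Suc i < length xs \<and> e = {xs!i, xs!Suc i}"
proof (induction xs rule: pe.induct)
  case (1 a b xs)
  then show ?case
  proof (cases "e = {a,b}")
    case True then show ?thesis by (rule_tac x=0 in exI) auto
  next
    case False
    then obtain i where "Suc i < length (b#xs)" "e = {(b#xs)!i, (b#xs)!Suc i}" using 1 by auto
    then show ?thesis by (rule_tac x="Suc i" in exI) auto
  qed
qed auto

definition cycl :: "'a list \<Rightarrow> nat \<Rightarrow> 'a" where
  "cycl cs i = cs ! (i mod length cs)"

lemma ce_cyc_in: assumes "xs \<noteq> []" "i < length xs"
  shows "{xs ! (i mod length xs), xs ! (Suc i mod length xs)} \<in> ce xs"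
proof (cases "Suc i < length xs")
  case True
  have "i mod length xs = i" "Suc i mod length xs = Suc i" using True by auto
  then show ?thesis using True pe_nth_in[of i xs] by (auto simp: ce_def)
next
  case False
  then have "Suc i = length xs" using assms by auto
  then have "i = length xs - 1" "i mod length xs = i" "Suc i mod length xs = 0" by auto
  then show ?thesis using assms by (auto simp: ce_def last_conv_nth hd_conv_nth)
qed

lemma ce_cyc_ex: assumes "xs \<noteq> []" "e \<in> ce xs"
  shows "\<exists>i<length xs. e = {xs ! (i mod length xs), xs ! (Suc i mod length xs)}"
proof (cases "e = {last xs, hd xs}")
  case True
  then show ?thesis using assms
    by (rule_tac x="length xs - 1" in exI) (auto simp: last_conv_nth hd_conv_nth)
next
  case False
  then have "e \<in> pe xs" using assms by (auto simp: ce_def)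
  then obtain i where "Suc i < length xs" "e = {xs!i, xs!Suc i}" using pe_nth_ex by blast
  then show ?thesis by (rule_tac x=i in exI) auto
qed

lemma rotate_hd_last: assumes "xs \<noteq> []" "i < length xs"
  shows "hd (rotate (Suc i) xs) = xs ! (Suc i mod length xs)"
    "last (rotate (Suc i) xs) = xs ! (i mod length xs)"
proof -
  have ne: "rotate (Suc i) xs \<noteq> []" using assms by simp
  have "rotate (Suc i) xs ! 0 = xs ! ((Suc i + 0) mod length xs)"
    using assms by (intro nth_rotate) auto
  then show "hd (rotate (Suc i) xs) = xs ! (Suc i mod length xs)"
    using assms by (simp only: hd_conv_nth[OF ne]) simp
  have "(Suc i + (length xs - 1)) mod length xs = i mod length xs"
    using assms by (simp add: mod_add_self1)
  moreover have "rotate (Suc i) xs ! (length xs - 1) = xs ! ((Suc i + (length xs - 1)) mod length xs)"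
    using assms by (intro nth_rotate) auto
  ultimately show "last (rotate (Suc i) xs) = xs ! (i mod length xs)"
    using assms by (simp only: last_conv_nth[OF ne] length_rotate)
qed

lemma orient:
  assumes "xs \<noteq> []" "{x,y} \<in> ce xs"
  shows "\<exists>R. set R = set xs \<and> distinct R = distinct xs \<and> length R = length xs \<and> ce R = ce xs
     \<and> hd R = y \<and> last R = x"
proof -
  obtain i where i: "i < length xs" "{x,y} = {xs ! (i mod length xs), xs ! (Suc i mod length xs)}"
    using ce_cyc_ex[OF assms] by blast
  define R0 where "R0 = rotate (Suc i) xs"
  have h: "hd R0 = xs ! (Suc i mod length xs)" "last R0 = xs ! (i mod length xs)"
    using rotate_hd_last[OF assms(1) i(1)] by (auto simp: R0_def)
  have ne: "R0 \<noteq> []" using assms by (simp add: R0_def)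
  have b: "set R0 = set xs \<and> distinct R0 = distinct xs \<and> length R0 = length xs \<and> ce R0 = ce xs"
    using ce_rotate[of "Suc i" xs] by (simp add: R0_def del: rotate_Suc)
  from i(2) consider "x = xs ! (i mod length xs) \<and> y = xs ! (Suc i mod length xs)"
    | "y = xs ! (i mod length xs) \<and> x = xs ! (Suc i mod length xs)"
    by (auto simp: doubleton_eq_iff)
  then show ?thesis
  proof cases
    case 1 then show ?thesis using b h by (rule_tac x=R0 in exI) auto
  next
    case 2 then show ?thesis using b h ne
      by (rule_tac x="rev R0" in exI) (auto simp: ce_rev hd_rev last_rev)
  qed
qed

lemma merge:
  assumes symR: "\<And>a b. R a b \<Longrightarrow> R b a"
    and ne: "C1 \<noteq> []" "C2 \<noteq> []" and e1: "{x,y} \<in> ce C1" and e2: "{u,v} \<in> ce C2"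
    and r: "R x u" "R y v"
    and g1: "\<forall>a b. {a,b} \<in> ce C1 \<longrightarrow> R a b" and g2: "\<forall>a b. {a,b} \<in> ce C2 \<longrightarrow> R a b"
  shows "\<exists>C. set C = set C1 \<union> set C2 \<and> length C = length C1 + length C2
     \<and> distinct C = (distinct C1 \<and> distinct C2 \<and> set C1 \<inter> set C2 = {})
     \<and> (\<forall>a b. {a,b} \<in> ce C \<longrightarrow> R a b) \<and> ce C1 \<union> ce C2 - {{x,y},{u,v}} \<subseteq> ce C"
proof -
  obtain R1 where R1: "set R1 = set C1" "distinct R1 = distinct C1" "length R1 = length C1"
     "ce R1 = ce C1" "hd R1 = y" "last R1 = x" using orient[OF ne(1) e1] by blast
  have e2': "{v,u} \<in> ce C2" using e2 by (simp add: insert_commute)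
  obtain R2 where R2: "set R2 = set C2" "distinct R2 = distinct C2" "length R2 = length C2"
     "ce R2 = ce C2" "hd R2 = u" "last R2 = v" using orient[OF ne(2) e2'] by blast
  have n1: "R1 \<noteq> []" "R2 \<noteq> []" using R1(3) R2(3) ne by auto
  have ceC: "ce (R1 @ R2) = insert {v,y} (pe R1 \<union> pe R2 \<union> {{x,u}})"
    using n1 R1 R2 by (simp add: ce_def pe_append)
  have c1: "ce C1 = insert {x,y} (pe R1)" using R1 by (simp add: ce_def)
  have c2: "ce C2 = insert {u,v} (pe R2)" using R2 by (simp add: ce_def insert_commute)
  have good: "\<forall>a b. {a,b} \<in> ce (R1 @ R2) \<longrightarrow> R a b"
  proof (intro allI impI)
    fix a b assume "{a,b} \<in> ce (R1 @ R2)"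
    then consider "{a,b} = {v,y}" | "{a,b} \<in> pe R1" | "{a,b} \<in> pe R2" | "{a,b} = {x,u}"
      using ceC by auto
    then show "R a b"
    proof cases
      case 1 then show ?thesis using r symR by (auto simp: doubleton_eq_iff)
    next
      case 2 then show ?thesis using g1 c1 by auto
    next
      case 3 then show ?thesis using g2 c2 by auto
    next
      case 4 then show ?thesis using r symR by (auto simp: doubleton_eq_iff)
    qed
  qed
  show ?thesis
    apply (rule exI[of _ "R1 @ R2"])
    using R1 R2 good ceC c1 c2 by auto
qed

lemma length_vdiff[simp]: "length (vdiff a b) = min (length a) (length b)"
  by (simp add: vdiff_def)
lemma nth_vdiff[simp]: "l < length a \<Longrightarrow> l < length b \<Longrightarrow> vdiff a b ! l = a!l - b!l"
  by (simp add: vdiff_def)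
lemma length_vscale[simp]: "length (vscale s v) = length v"
  by (simp add: vscale_def)
lemma nth_vscale[simp]: "l < length v \<Longrightarrow> vscale s v ! l = s * v!l"
  by (simp add: vscale_def)
lemma length_unitv[simp]: "length (unitv d j) = d"
  by (simp add: unitv_def)
lemma nth_unitv[simp]: "l < d \<Longrightarrow> unitv d j ! l = (if l = j then 1 else 0)"
  by (simp add: unitv_def)

lemma vdiff_app: "length a = length b \<Longrightarrow> vdiff (a@[x]) (b@[y]) = vdiff a b @ [x - y]"
  by (simp add: vdiff_def)
lemma vscale_app: "vscale s (v@[x]) = vscale s v @ [s*x]"
  by (simp add: vscale_def)
lemma unitv_app: "j < d \<Longrightarrow> unitv (Suc d) j = unitv d j @ [0]"
  by (simp add: unitv_def)

lemma axis_char: "axis_mult d g v \<longleftrightarrow> length v = d \<and>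
   (\<exists>j<d. \<exists>c\<in>{int g, - int g}. \<forall>l<d. v!l = (if l = j then c else 0))"
proof
  assume "axis_mult d g v"
  then obtain j where j: "j < d" "v = vscale (int g) (unitv d j) \<or> v = vscale (- int g) (unitv d j)"
    by (auto simp: axis_mult_def)
  then show "length v = d \<and> (\<exists>j<d. \<exists>c\<in>{int g, - int g}. \<forall>l<d. v!l = (if l = j then c else 0))"
    by (auto intro!: exI[of _ j])
next
  assume "length v = d \<and> (\<exists>j<d. \<exists>c\<in>{int g, - int g}. \<forall>l<d. v!l = (if l = j then c else 0))"
  then obtain j c where j: "length v = d" "j < d" "c \<in> {int g, - int g}" "\<forall>l<d. v!l = (if l = j then c else 0)"
    by blast
  have "v = vscale c (unitv d j)"
    by (rule nth_equalityI) (use j in auto)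
  then show "axis_mult d g v" using j by (auto simp: axis_mult_def)
qed

lemma axis_app0: "axis_mult d g v \<Longrightarrow> axis_mult (Suc d) g (v @ [0])"
  unfolding axis_char by (auto simp: nth_append less_Suc_eq intro!: bexI)

lemma vdiff_swap: "length a = length b \<Longrightarrow> vdiff b a = vscale (-1) (vdiff a b)"
  by (rule nth_equalityI) auto
lemma vscale_vscale[simp]: "vscale s (vscale t v) = vscale (s*t) v"
  by (simp add: vscale_def)
lemma vscale_1[simp]: "vscale 1 v = v"
  by (induction v) (simp_all add: vscale_def)

lemma axis_scale: "s \<in> {1, -1} \<Longrightarrow> axis_mult d g v \<Longrightarrow> axis_mult d g (vscale s v)"
  unfolding axis_char by auto

lemma inC_app0: "in_C \<alpha> \<beta> d v \<Longrightarrow> in_C \<alpha> \<beta> (Suc d) (v@[0])"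
  unfolding in_C_def
  apply (elim conjE exE)
  subgoal for i j
    apply (rule conjI, simp)
    apply (rule exI[of _ i], rule exI[of _ j])
    apply (auto simp: nth_append less_Suc_eq)
    done
  done

lemma inC_cross:
  assumes "axis_mult d g v" "(g = \<alpha> \<and> \<bar>c\<bar> = int \<beta>) \<or> (g = \<beta> \<and> \<bar>c\<bar> = int \<alpha>)"
  shows "in_C \<alpha> \<beta> (Suc d) (v@[c])"
proof -
  obtain j e where j: "length v = d" "j < d" "e \<in> {int g, - int g}" "\<forall>l<d. v!l = (if l = j then e else 0)"
    using assms(1) unfolding axis_char by blast
  show ?thesis using assms(2)
  proof
    assume h: "g = \<alpha> \<and> \<bar>c\<bar> = int \<beta>"
    show ?thesis unfolding in_C_def
      apply (rule conjI, simp add: j)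
      apply (rule exI[of _ j], rule exI[of _ d])
      using j h by (auto simp: nth_append less_Suc_eq)
  next
    assume h: "g = \<beta> \<and> \<bar>c\<bar> = int \<alpha>"
    show ?thesis unfolding in_C_def
      apply (rule conjI, simp add: j)
      apply (rule exI[of _ d], rule exI[of _ j])
      using j h by (auto simp: nth_append less_Suc_eq)
  qed
qed

lemma not_inC_axis:
  assumes "\<alpha> > 0" "\<beta> > 0" "in_C \<alpha> \<beta> d v" "axis_mult d g v" shows False
proof -
  obtain j e where j: "length v = d" "j < d" "e \<in> {int g, - int g}" "\<forall>l<d. v!l = (if l = j then e else 0)"
    using assms(4) unfolding axis_char by blast
  obtain i i' where i: "i < d" "i' < d" "i \<noteq> i'" "\<bar>v ! i\<bar> = int \<alpha>" "\<bar>v ! i'\<bar> = int \<beta>"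
    using assms(3) unfolding in_C_def by blast
  show False using i j assms(1,2) by (cases "i = j") auto
qed

lemma axis_nonzero: "g > 0 \<Longrightarrow> axis_mult d g v \<Longrightarrow> \<exists>l<d. v ! l \<noteq> 0"
  unfolding axis_char by auto

lemma inC_neg: "in_C \<alpha> \<beta> d v \<Longrightarrow> in_C \<alpha> \<beta> d (vscale (-1) v)"
  unfolding in_C_def apply (elim conjE exE)
  subgoal for i j by (rule conjI, simp, rule exI[of _ i], rule exI[of _ j]) auto
  done

lemma board_len: "a \<in> board ns \<Longrightarrow> length a = length ns"
  by (simp add: board_def)

lemma adj_sym: "adj \<alpha> \<beta> ns a b \<Longrightarrow> adj \<alpha> \<beta> ns b a"
  unfolding adj_def using vdiff_swap[of a b] inC_neg board_len by metis

definition M :: "nat \<Rightarrow> nat \<Rightarrow> int list \<Rightarrow> int list \<Rightarrow> int list \<Rightarrow> int list \<Rightarrow> bool" where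
  "M D g x y z w \<longleftrightarrow> axis_mult D g (vdiff x z) \<and> (\<exists>s\<in>{1,-1}. vdiff x z = vscale s (vdiff y w))"

lemma cyc_mem: "cs \<noteq> [] \<Longrightarrow> cyc cs i \<in> set cs"
  by (simp add: cyc_def)

lemma ce_cyc_in': "cs \<noteq> [] \<Longrightarrow> i < length cs \<Longrightarrow> {cyc cs i, cyc cs (Suc i)} \<in> ce cs"
  using ce_cyc_in[of cs i] by (simp add: cyc_def)

lemma ce_cyc_ex': "cs \<noteq> [] \<Longrightarrow> e \<in> ce cs \<Longrightarrow> \<exists>i<length cs. e = {cyc cs i, cyc cs (Suc i)}"
  using ce_cyc_ex[of cs e] by (simp add: cyc_def)

lemma ce_mem: "cs \<noteq> [] \<Longrightarrow> {a,b} \<in> ce cs \<Longrightarrow> a \<in> set cs \<and> b \<in> set cs"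
  using ce_cyc_ex'[of cs "{a,b}"] cyc_mem[of cs] by (auto simp: doubleton_eq_iff)

lemma site_to_M:
  assumes "is_site g cs st" "cs \<noteq> []" "\<forall>a\<in>set cs. length a = D"
  shows "\<exists>x y z w. {x,y} \<in> ce cs \<and> {z,w} \<in> ce cs \<and> M D g x y z w \<and> site_support cs st = {x,y,z,w}"
proof -
  obtain b n m where st: "st = (b,n,m)" by (cases st) auto
  have L: "\<And>i. length (cyc cs i) = D" using assms(2,3) cyc_mem by blast
  have nm: "n < length cs \<and> m < length cs" using assms(1) st
      by (cases b) (simp_all add: is_site_def well_oriented_site_def non_well_oriented_site_def)
  have e1: "{cyc cs n, cyc cs (Suc n)} \<in> ce cs" "{cyc cs m, cyc cs (Suc m)} \<in> ce cs"
      using nm by (simp_all add: ce_cyc_in'[OF assms(2)])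
  show ?thesis
  proof (cases b)
    case True
    have ws: "well_oriented_site g cs n m" using assms(1) st True by (simp add: is_site_def)
    obtain s where s: "s \<in> {1,-1}"
      "vdiff (cyc cs (Suc n)) (cyc cs m) = vscale s (vdiff (cyc cs (Suc m)) (cyc cs n))"
      "axis_mult D g (vdiff (cyc cs (Suc n)) (cyc cs m))"
      using ws unfolding well_oriented_site_def L by blast
    have sw: "vdiff (cyc cs (Suc m)) (cyc cs n) = vscale (-1) (vdiff (cyc cs n) (cyc cs (Suc m)))"
      by (rule vdiff_swap) (simp add: L)
    have "vdiff (cyc cs (Suc n)) (cyc cs m) = vscale (-s) (vdiff (cyc cs n) (cyc cs (Suc m)))"
      unfolding s(2) sw by simp
    moreover have "-s \<in> {1,-1}" using s by auto
    ultimately have "M D g (cyc cs (Suc n)) (cyc cs n) (cyc cs m) (cyc cs (Suc m))"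
      using s(3) unfolding M_def by blast
    moreover have "{cyc cs (Suc n), cyc cs n} \<in> ce cs" using e1 by (simp add: insert_commute)
    moreover have "site_support cs st = {cyc cs (Suc n), cyc cs n, cyc cs m, cyc cs (Suc m)}"
      using st by (simp add: site_support_def insert_commute)
    ultimately show ?thesis using e1 by blast
  next
    case False
    have ws: "non_well_oriented_site g cs n m" using assms(1) st False by (simp add: is_site_def)
    obtain s where s: "s \<in> {1,-1}"
      "vdiff (cyc cs n) (cyc cs m) = vscale s (vdiff (cyc cs (Suc m)) (cyc cs (Suc n)))"
      "axis_mult D g (vdiff (cyc cs n) (cyc cs m))"
      using ws unfolding non_well_oriented_site_def L by blast
    have sw: "vdiff (cyc cs (Suc m)) (cyc cs (Suc n)) = vscale (-1) (vdiff (cyc cs (Suc n)) (cyc cs (Suc m)))"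
      by (rule vdiff_swap) (simp add: L)
    have "vdiff (cyc cs n) (cyc cs m) = vscale (-s) (vdiff (cyc cs (Suc n)) (cyc cs (Suc m)))"
      unfolding s(2) sw by simp
    moreover have "-s \<in> {1,-1}" using s by auto
    ultimately have "M D g (cyc cs n) (cyc cs (Suc n)) (cyc cs m) (cyc cs (Suc m))"
      using s(3) unfolding M_def by blast
    moreover have "site_support cs st = {cyc cs n, cyc cs (Suc n), cyc cs m, cyc cs (Suc m)}"
      using st by (simp add: site_support_def)
    ultimately show ?thesis using e1 by blast
  qed
qed


lemma M_facts:
  assumes "M D g X Y Z W" "length X = D" "length Y = D" "length Z = D" "length W = D"
  shows "\<exists>s\<in>{1,-1}. vdiff X Z = vscale s (vdiff W Y) \<and> vdiff Y W = vscale s (vdiff Z X)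
     \<and> axis_mult D g (vdiff X Z) \<and> axis_mult D g (vdiff Y W)"
proof -
  obtain s0 where s0: "s0 \<in> {1,-1}" "vdiff X Z = vscale s0 (vdiff Y W)" "axis_mult D g (vdiff X Z)"
    using assms(1) unfolding M_def by blast
  have ss: "s0 * s0 = 1" using s0 by auto
  have YW: "vdiff Y W = vscale s0 (vdiff X Z)" using s0(2) ss by simp
  have a2: "axis_mult D g (vdiff Y W)" unfolding YW by (rule axis_scale[OF s0(1) s0(3)])
  have sw1: "vdiff W Y = vscale (-1) (vdiff Y W)" "vdiff Z X = vscale (-1) (vdiff X Z)"
    using assms by (simp_all add: vdiff_swap[of Y W] vdiff_swap[of X Z])
  have q1: "vscale (-s0) (vdiff W Y) = vscale s0 (vdiff Y W)" by (simp add: sw1(1))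
  have q2: "vscale (-s0) (vdiff Z X) = vscale s0 (vdiff X Z)" by (simp add: sw1(2))
  have "-s0 \<in> {1,-1}" using s0(1) by auto
  moreover have "vdiff X Z = vscale (-s0) (vdiff W Y)" using q1 s0(2) by simp
  moreover have "vdiff Y W = vscale (-s0) (vdiff Z X)" using q2 YW by simp
  ultimately show ?thesis
    using s0(3) a2 by blast
qed

lemma M_to_site:
  assumes ne: "C \<noteq> []" and e: "{X,Y} \<in> ce C" "{Z,W} \<in> ce C" and m: "M D g X Y Z W"
    and len: "\<forall>a\<in>set C. length a = D"
  shows "\<exists>st. is_site g C st \<and> site_support C st = {X,Y,Z,W}"
proof -
  obtain i where i: "i < length C" "{X,Y} = {cyc C i, cyc C (Suc i)}" using ce_cyc_ex'[OF ne e(1)] by blast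
  obtain j where j: "j < length C" "{Z,W} = {cyc C j, cyc C (Suc j)}" using ce_cyc_ex'[OF ne e(2)] by blast
  have L: "\<And>i. length (cyc C i) = D" using ne len cyc_mem by blast
  have LX: "length X = D" "length Y = D" "length Z = D" "length W = D"
    using ce_mem[OF ne e(1)] ce_mem[OF ne e(2)] len by auto
  obtain s where s: "s\<in>{1,-1}" "vdiff X Z = vscale s (vdiff W Y)" "vdiff Y W = vscale s (vdiff Z X)"
     "axis_mult D g (vdiff X Z)" "axis_mult D g (vdiff Y W)"
    using M_facts[OF m LX] by blast
  from i(2) j(2) consider
      "X = cyc C i \<and> Y = cyc C (Suc i) \<and> Z = cyc C j \<and> W = cyc C (Suc j)"
    | "X = cyc C (Suc i) \<and> Y = cyc C i \<and> Z = cyc C j \<and> W = cyc C (Suc j)"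
    | "X = cyc C i \<and> Y = cyc C (Suc i) \<and> Z = cyc C (Suc j) \<and> W = cyc C j"
    | "X = cyc C (Suc i) \<and> Y = cyc C i \<and> Z = cyc C (Suc j) \<and> W = cyc C j"
    by (auto simp: doubleton_eq_iff)
  then show ?thesis
  proof cases
    case 1
    then show ?thesis using s i j L
      by (rule_tac x="(False,i,j)" in exI)
        (auto simp: is_site_def non_well_oriented_site_def site_support_def)
  next
    case 2
    then show ?thesis using s i j L
      by (rule_tac x="(True,i,j)" in exI)
        (auto simp: is_site_def well_oriented_site_def site_support_def insert_commute)
  next
    case 3
    then show ?thesis using s i j L
      by (rule_tac x="(True,i,j)" in exI)
        (auto simp: is_site_def well_oriented_site_def site_support_def insert_commute)
  next
    case 4
    then show ?thesis using s i j L
      by (rule_tac x="(False,i,j)" in exI)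
        (auto simp: is_site_def non_well_oriented_site_def site_support_def insert_commute)
  qed
qed

lemma M_edges_ne:
  assumes "\<alpha> > 0" "\<beta> > 0" "g > 0" "M D g x y z w" "in_C \<alpha> \<beta> D (vdiff x y)"
    "length x = D" "length y = D" "length z = D" "length w = D"
  shows "{x,y} \<noteq> {z,w}"
proof
  assume eq: "{x,y} = {z,w}"
  have ax: "axis_mult D g (vdiff x z)" using assms(4) by (simp add: M_def)
  from eq consider "x = z" | "x = w \<and> y = z" by (auto simp: doubleton_eq_iff)
  then show False
  proof cases
    case 1
    then show False using axis_nonzero[OF assms(3) ax] assms(6) by auto
  next
    case 2
    then show False using not_inC_axis[OF assms(1,2,5)] ax by simp
  qed
qed

inductive reach :: "nat \<Rightarrow> nat \<Rightarrow> nat \<Rightarrow> nat set \<Rightarrow> bool" for \<alpha> \<beta> k where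
  single: "1 \<le> t \<Longrightarrow> t \<le> k \<Longrightarrow> reach \<alpha> \<beta> k {t}"
| add: "reach \<alpha> \<beta> k T \<Longrightarrow> t0 \<in> T \<Longrightarrow> t \<notin> T \<Longrightarrow> 1 \<le> t \<Longrightarrow> t \<le> k \<Longrightarrow>
     int t - int t0 \<in> {int \<beta>, - int \<beta>, int \<alpha>, - int \<alpha>} \<Longrightarrow> reach \<alpha> \<beta> k (insert t T)"

lemma reach_sub: "reach \<alpha> \<beta> k T \<Longrightarrow> T \<subseteq> {1..k}"
  by (induction rule: reach.induct) auto

lemma reach_all:
  assumes pos: "\<alpha> > 0" "\<beta> > 0" and cop: "coprime \<alpha> \<beta>" and kk: "\<alpha> + \<beta> - 1 \<le> k"
  shows "reach \<alpha> \<beta> k {1..k}"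
proof -
  define N where "N = \<alpha> + \<beta>"
  define f where "f j = (j * \<alpha>) mod N" for j
  have copN: "coprime N \<alpha>"
    unfolding N_def coprime_iff_gcd_eq_1 using cop
    by (metis add.commute coprime_iff_gcd_eq_1 gcd.commute gcd_add1)
  have inj: "i = j" if "i < N" "j < N" "f i = f j" for i j
  proof -
    have *: "i = j" if "i \<le> j" "j < N" "f i = f j" for i j
    proof -
      have "N dvd j * \<alpha> - i * \<alpha>"
        using that mod_eq_dvd_iff_nat[of "i*\<alpha>" "j*\<alpha>" N] by (simp add: f_def)
      then have "N dvd (j - i) * \<alpha>" by (simp add: diff_mult_distrib)
      then have "N dvd j - i" using coprime_dvd_mult_left_iff[OF copN] by simp
      then show "i = j" using that by (metis diff_less_mono2 diff_self_eq_0 dvd_imp_le le_antisym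
            less_nat_zero_code not_le diff_le_self le_less_trans neq0_conv)
    qed
    show ?thesis using *[of i j] *[of j i] that by (cases "i \<le> j") auto
  qed
  have nz: "f j \<noteq> 0" if "0 < j" "j < N" for j
  proof
    assume "f j = 0"
    then have "N dvd j * \<alpha>" by (simp add: f_def mod_eq_0_iff_dvd)
    then have "N dvd j" using coprime_dvd_mult_left_iff[OF copN] by simp
    then show False using that by (simp add: dvd_imp_le leD)
  qed
  have fl: "f j < N" for j using pos by (simp add: f_def N_def)
  have stepf: "int (f (Suc j)) - int (f j) \<in> {int \<beta>, - int \<beta>, int \<alpha>, - int \<alpha>}" for j
  proof -
    have "f (Suc j) = (f j + \<alpha>) mod N" unfolding f_def by (metis mod_add_left_eq mult_Suc add.commute)
    moreover have "f j + \<alpha> < 2 * N" using fl[of j] by (simp add: N_def)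
    ultimately have "f (Suc j) = f j + \<alpha> \<or> f (Suc j) = f j + \<alpha> - N"
      by (metis le_mod_geq mod_less mult_2 nat_less_le not_less add_diff_cancel_left'
          less_diff_conv2 le_add1 mod_if)
    then show ?thesis
    proof
      assume "f (Suc j) = f j + \<alpha> - N"
      moreover have "f j + \<alpha> \<ge> N \<or> f (Suc j) = f j + \<alpha>"
        using \<open>f (Suc j) = (f j + \<alpha>) mod N\<close> by (metis mod_less not_le)
      ultimately show ?thesis by (auto simp: N_def)
    qed simp
  qed
  have R1: "reach \<alpha> \<beta> k (f ` {1..j})" if "1 \<le> j" "j < N" for j
    using that
  proof (induction j rule: dec_induct)
    case base
    have "f 1 = \<alpha>" using pos by (simp add: f_def N_def)
    then show ?case using kk pos by (auto intro: reach.single simp: N_def)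
  next
    case (step j)
    have "{1..Suc j} = insert (Suc j) {1..j}" by auto
    then have "f ` {1..Suc j} = insert (f (Suc j)) (f ` {1..j})" by simp
    moreover have "reach \<alpha> \<beta> k (insert (f (Suc j)) (f ` {1..j}))"
    proof (rule reach.add[OF step.IH])
      show "j < N" using step by simp
      show "f j \<in> f ` {1..j}" using step by auto
      show "f (Suc j) \<notin> f ` {1..j}"
      proof
        assume "f (Suc j) \<in> f ` {1..j}"
        then obtain i where i: "i \<in> {1..j}" "f (Suc j) = f i" by auto
        then have "Suc j = i" using inj[of "Suc j" i] step.prems by simp
        then show False using i by simp
      qed
      show "1 \<le> f (Suc j)" using nz[of "Suc j"] step by simp
      show "f (Suc j) \<le> k" using fl[of "Suc j"] kk by (simp add: N_def)
      show "int (f (Suc j)) - int (f j) \<in> {int \<beta>, - int \<beta>, int \<alpha>, - int \<alpha>}" by (rule stepf)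
    qed
    ultimately show ?case by simp
  qed
  have img: "f ` {1..N-1} = {1..N-1}"
  proof (rule card_subset_eq)
    show "finite {1..N-1}" by simp
    show "f ` {1..N-1} \<subseteq> {1..N-1}"
    proof
      fix x assume "x \<in> f ` {1..N-1}"
      then obtain j where j: "j \<in> {1..N-1}" "x = f j" by auto
      have "N > 0" using pos by (simp add: N_def)
      then have "j < N" using j by auto
      then have "x \<noteq> 0" using nz[of j] j by simp
      moreover have "x < N" using fl j by simp
      ultimately show "x \<in> {1..N-1}" by simp
    qed
    have "inj_on f {1..N-1}"
    proof (rule inj_onI)
      fix i j assume "i \<in> {1..N-1}" "j \<in> {1..N-1}" "f i = f j"
      moreover have "N > 0" using pos by (simp add: N_def)
      ultimately show "i = j" using inj[of i j] by auto
    qed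
    then show "card (f ` {1..N-1}) = card {1..N-1}" by (rule card_image)
  qed
  have base: "reach \<alpha> \<beta> k {1..N-1}" using R1[of "N-1"] img pos by (simp add: N_def)
  have "reach \<alpha> \<beta> k {1..j}" if "N - 1 \<le> j" "j \<le> k" for j
    using that
  proof (induction j rule: dec_induct)
    case base then show ?case using \<open>reach \<alpha> \<beta> k {1..N-1}\<close> by simp
  next
    case (step j)
    have "{1..Suc j} = insert (Suc j) {1..j}" by auto
    moreover have "reach \<alpha> \<beta> k (insert (Suc j) {1..j})"
    proof (rule reach.add[OF step.IH])
      show "j \<le> k" using step by simp
      show "Suc j - \<alpha> \<in> {1..j}" using step pos by (auto simp: N_def)
      show "Suc j \<notin> {1..j}" by simp
      show "1 \<le> Suc j" by simp
      show "Suc j \<le> k" using step by simp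
      show "int (Suc j) - int (Suc j - \<alpha>) \<in> {int \<beta>, - int \<beta>, int \<alpha>, - int \<alpha>}"
        using step pos by (auto simp: N_def)
    qed
    ultimately show ?case by simp
  qed
  then show ?thesis using kk by (simp add: N_def)
qed

lemma pe_map: "pe (map f xs) = (\<lambda>e. f ` e) ` pe xs"
  by (induction xs rule: pe.induct) auto

lemma ce_map: "xs \<noteq> [] \<Longrightarrow> ce (map f xs) = (\<lambda>e. f ` e) ` ce xs"
  by (simp add: ce_def pe_map last_map hd_map)

lemma board_app: "a @ [c] \<in> board (ns @ [k]) \<longleftrightarrow> a \<in> board ns \<and> 1 \<le> c \<and> c \<le> int k"
proof -
  have "(\<forall>i<Suc (length ns). 1 \<le> (a @ [c]) ! i \<and> (a @ [c]) ! i \<le> int ((ns @ [k]) ! i))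
     \<longleftrightarrow> (\<forall>i<length ns. 1 \<le> (a @ [c]) ! i \<and> (a @ [c]) ! i \<le> int ((ns @ [k]) ! i)) \<and>
         (1 \<le> (a @ [c]) ! length ns \<and> (a @ [c]) ! length ns \<le> int ((ns @ [k]) ! length ns))"
    by (auto simp: less_Suc_eq)
  then show ?thesis
    by (auto simp: board_def nth_append)
qed

lemma board_snoc: "b \<in> board (ns @ [k]) \<Longrightarrow> \<exists>a c. b = a @ [c] \<and> a \<in> board ns \<and> 1 \<le> c \<and> c \<le> int k"
proof -
  assume b: "b \<in> board (ns @ [k])"
  then have "b \<noteq> []" by (auto simp: board_def)
  then have "b = butlast b @ [last b]" by simp
  then show ?thesis using b board_app by metis
qed

lemma inC_dvd:
  assumes "in_C \<alpha> \<beta> d v" "l < d" shows "int (gcd \<alpha> \<beta>) dvd v ! l"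
proof -
  obtain i j where ij: "i < d" "j < d" "\<bar>v ! i\<bar> = int \<alpha>" "\<bar>v ! j\<bar> = int \<beta>"
    "\<forall>l<d. l \<noteq> i \<and> l \<noteq> j \<longrightarrow> v ! l = 0" using assms(1) unfolding in_C_def by blast
  have a: "int (gcd \<alpha> \<beta>) dvd \<bar>v ! i\<bar>" using ij(3) by (simp add: int_dvd_int_iff)
  have b: "int (gcd \<alpha> \<beta>) dvd \<bar>v ! j\<bar>" using ij(4) by (simp add: int_dvd_int_iff)
  show ?thesis
  proof (cases "l = i \<or> l = j")
    case True then show ?thesis using a b by auto
  next
    case False then show ?thesis using ij(5) assms(2) by simp
  qed
qed

locale lay =
  fixes \<alpha> \<beta> k :: nat and ns :: "nat list" and cs :: "int list list"
    and xA yA zA wA xB yB zB wB :: "int list"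
  assumes apos: "\<alpha> > 0" and bpos: "\<beta> > 0"
    and ham: "ham_cycle \<alpha> \<beta> ns cs"
    and eA: "{xA,yA} \<in> ce cs" "{zA,wA} \<in> ce cs" and MA: "M (length ns) \<alpha> xA yA zA wA"
    and eB: "{xB,yB} \<in> ce cs" "{zB,wB} \<in> ce cs" and MB: "M (length ns) \<beta> xB yB zB wB"
    and AB: "{xA,yA,zA,wA} \<inter> {xB,yB,zB,wB} = {}"
begin

definition lift :: "nat \<Rightarrow> int list \<Rightarrow> int list" where "lift t a = a @ [int t]"
definition L :: "nat \<Rightarrow> int list list" where "L t = map (lift t) cs"
abbreviation adjN where "adjN \<equiv> adj \<alpha> \<beta> (ns @ [k])"

definition Eo :: "nat \<Rightarrow> nat \<Rightarrow> int list set" where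
  "Eo s t = (if int t = int s + int \<beta> then {xA,yA} else if int t = int s - int \<beta> then {zA,wA}
    else if int t = int s + int \<alpha> then {xB,yB} else if int t = int s - int \<alpha> then {zB,wB} else {})"

definition Inv :: "nat set \<Rightarrow> int list list \<Rightarrow> bool" where
  "Inv T C \<longleftrightarrow> C \<noteq> [] \<and> set C = (\<Union>t\<in>T. lift t ` set cs) \<and> distinct C \<and> 3 \<le> length C \<and>
    (\<forall>a b. {a,b} \<in> ce C \<longrightarrow> adjN a b) \<and>
    (\<forall>s\<in>T. \<forall>e\<in>ce cs. (\<forall>t'\<in>T. e \<noteq> Eo s t') \<longrightarrow> lift s ` e \<in> ce C)"

lemma cs_props: "cs \<noteq> []" "set cs = board ns" "distinct cs" "3 \<le> length cs"
  using ham by (auto simp: ham_cycle_def)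

lemma cs_len: "a \<in> set cs \<Longrightarrow> length a = length ns"
  using cs_props(2) board_len by blast

lemma cs_adj_all: "adj \<alpha> \<beta> ns (cyc cs i) (cyc cs (Suc i))"
proof -
  have "i mod length cs < length cs" using cs_props(1) by simp
  then have "adj \<alpha> \<beta> ns (cyc cs (i mod length cs)) (cyc cs (Suc (i mod length cs)))"
    using ham by (simp add: ham_cycle_def)
  moreover have "cyc cs (i mod length cs) = cyc cs i" by (simp add: cyc_def)
  moreover have "cyc cs (Suc (i mod length cs)) = cyc cs (Suc i)" by (simp add: cyc_def mod_Suc_eq)
  ultimately show ?thesis by simp
qed

lemma cs_good: "{a,b} \<in> ce cs \<Longrightarrow> adj \<alpha> \<beta> ns a b"
proof -
  assume "{a,b} \<in> ce cs"
  then obtain i where "{a,b} = {cyc cs i, cyc cs (Suc i)}" using ce_cyc_ex'[OF cs_props(1)] by blast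
  then show ?thesis using cs_adj_all[of i] adj_sym by (auto simp: doubleton_eq_iff)
qed

lemma ce_ne: "e \<in> ce cs \<Longrightarrow> e \<noteq> {}"
  using ce_cyc_ex'[OF cs_props(1)] by fastforce

lemma lift_eq[simp]: "lift s a = lift t b \<longleftrightarrow> s = t \<and> a = b"
  by (auto simp: lift_def)

lemma lift_img_eq: "e \<noteq> {} \<Longrightarrow> lift s ` e = lift t ` e' \<Longrightarrow> s = t \<and> e = e'"
proof -
  assume ne: "e \<noteq> {}" and eq: "lift s ` e = lift t ` e'"
  obtain a where "a \<in> e" using ne by blast
  then have "lift s a \<in> lift t ` e'" using eq by blast
  then have st: "s = t" by auto
  have "inj (lift s)" by (rule injI) simp
  then show ?thesis using eq st by (simp add: inj_image_eq_iff)
qed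

lemma adj_lift: "adj \<alpha> \<beta> ns a b \<Longrightarrow> 1 \<le> t \<Longrightarrow> t \<le> k \<Longrightarrow> adjN (lift t a) (lift t b)"
  unfolding adj_def lift_def
  by (auto simp: board_app vdiff_app board_len intro!: inC_app0)

lemma L_props: "L t \<noteq> []" "set (L t) = lift t ` set cs" "distinct (L t)" "length (L t) = length cs"
   "ce (L t) = (\<lambda>e. lift t ` e) ` ce cs"
proof -
  show "L t \<noteq> []" "set (L t) = lift t ` set cs" "length (L t) = length cs"
    using cs_props by (auto simp: L_def)
  have "inj (lift t)" by (rule injI) simp
  then show "distinct (L t)" using cs_props(3) by (simp add: L_def distinct_map inj_on_def)
  show "ce (L t) = (\<lambda>e. lift t ` e) ` ce cs" using cs_props(1) by (simp add: L_def ce_map)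
qed

lemma L_good: "1 \<le> t \<Longrightarrow> t \<le> k \<Longrightarrow> {a,b} \<in> ce (L t) \<Longrightarrow> adjN a b"
proof -
  assume t: "1 \<le> t" "t \<le> k" and "{a,b} \<in> ce (L t)"
  then obtain e where e: "e \<in> ce cs" "{a,b} = lift t ` e" using L_props(5) by auto
  then obtain i where "e = {cyc cs i, cyc cs (Suc i)}" using ce_cyc_ex'[OF cs_props(1)] by blast
  then have "{a,b} = {lift t (cyc cs i), lift t (cyc cs (Suc i))}" using e by simp
  moreover have "adjN (lift t (cyc cs i)) (lift t (cyc cs (Suc i)))"
    using adj_lift[OF cs_adj_all t] .
  ultimately show ?thesis using adj_sym by (auto simp: doubleton_eq_iff)
qed

lemma cross:
  assumes "M (length ns) g x y z w" "x \<in> set cs" "y \<in> set cs" "z \<in> set cs" "w \<in> set cs"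
    "1 \<le> t0" "t0 \<le> k" "1 \<le> t" "t \<le> k"
    "(g = \<alpha> \<and> \<bar>int t0 - int t\<bar> = int \<beta>) \<or> (g = \<beta> \<and> \<bar>int t0 - int t\<bar> = int \<alpha>)"
  shows "adjN (lift t0 x) (lift t z) \<and> adjN (lift t0 y) (lift t w)"
proof -
  have l: "length x = length ns" "length y = length ns" "length z = length ns" "length w = length ns"
    using assms(2-5) cs_len by auto
  obtain s where s: "axis_mult (length ns) g (vdiff x z)" "axis_mult (length ns) g (vdiff y w)"
    using M_facts[OF assms(1) l] by blast
  have b: "x \<in> board ns" "y \<in> board ns" "z \<in> board ns" "w \<in> board ns"
    using assms(2-5) cs_props(2) by auto
  have "in_C \<alpha> \<beta> (Suc (length ns)) (vdiff x z @ [int t0 - int t])"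
    by (rule inC_cross[OF s(1)]) (use assms(10) in auto)
  moreover have "in_C \<alpha> \<beta> (Suc (length ns)) (vdiff y w @ [int t0 - int t])"
    by (rule inC_cross[OF s(2)]) (use assms(10) in auto)
  ultimately show ?thesis
    using b assms(6-9) l unfolding adj_def lift_def by (auto simp: board_app vdiff_app)
qed

lemma Mlen: "M (length ns) g x y z w \<Longrightarrow> {x,y} \<in> ce cs \<Longrightarrow> {z,w} \<in> ce cs \<Longrightarrow>
   x \<in> set cs \<and> y \<in> set cs \<and> z \<in> set cs \<and> w \<in> set cs"
  using ce_mem[OF cs_props(1)] by blast

lemma vA: "xA \<in> set cs" "yA \<in> set cs" "zA \<in> set cs" "wA \<in> set cs"
  using Mlen[OF MA eA] by auto
lemma vB: "xB \<in> set cs" "yB \<in> set cs" "zB \<in> set cs" "wB \<in> set cs"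
  using Mlen[OF MB eB] by auto

lemma dA: "{xA,yA} \<noteq> {zA,wA}"
proof (rule M_edges_ne[OF apos bpos apos MA])
  show "in_C \<alpha> \<beta> (length ns) (vdiff xA yA)" using cs_good[OF eA(1)] by (simp add: adj_def)
qed (use vA cs_len in auto)

lemma dB: "{xB,yB} \<noteq> {zB,wB}"
proof (rule M_edges_ne[OF apos bpos bpos MB])
  show "in_C \<alpha> \<beta> (length ns) (vdiff xB yB)" using cs_good[OF eB(1)] by (simp add: adj_def)
qed (use vB cs_len in auto)

lemma Eo_inj: "Eo s t \<noteq> {} \<Longrightarrow> Eo s t = Eo s t' \<Longrightarrow> t = t'"
  using dA dB AB unfolding Eo_def
  by (auto split: if_splits simp: doubleton_eq_iff)


end

context lay
begin

lemma partner:
  assumes "1 \<le> t0" "t0 \<le> k" "1 \<le> t" "t \<le> k"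
    and d: "int t - int t0 \<in> {int \<beta>, - int \<beta>, int \<alpha>, - int \<alpha>}"
  shows "\<exists>p q u v. Eo t0 t = {p,q} \<and> Eo t t0 = {u,v} \<and> {p,q} \<in> ce cs \<and> {u,v} \<in> ce cs \<and>
     adjN (lift t0 p) (lift t u) \<and> adjN (lift t0 q) (lift t v)"
proof -
  consider "int t = int t0 + int \<beta>" | "int t0 = int t + int \<beta>"
    | "int t = int t0 + int \<alpha> \<and> \<alpha> \<noteq> \<beta>" | "int t0 = int t + int \<alpha> \<and> \<alpha> \<noteq> \<beta>"
    using d by force
  then show ?thesis
  proof cases
    case 1
    have E: "Eo t0 t = {xA,yA}" "Eo t t0 = {zA,wA}" using 1 bpos unfolding Eo_def by simp_all
    have c: "\<alpha> = \<alpha> \<and> \<bar>int t0 - int t\<bar> = int \<beta>" using 1 by simp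
    have "adjN (lift t0 xA) (lift t zA) \<and> adjN (lift t0 yA) (lift t wA)"
      using cross[OF MA vA assms(1-4)] c by blast
    then show ?thesis using E eA by blast
  next
    case 2
    have E: "Eo t0 t = {zA,wA}" "Eo t t0 = {xA,yA}" using 2 bpos unfolding Eo_def by simp_all
    have c: "\<alpha> = \<alpha> \<and> \<bar>int t - int t0\<bar> = int \<beta>" using 2 by simp
    have "adjN (lift t xA) (lift t0 zA) \<and> adjN (lift t yA) (lift t0 wA)"
      using cross[OF MA vA assms(3,4,1,2)] c by blast
    then have "adjN (lift t0 zA) (lift t xA) \<and> adjN (lift t0 wA) (lift t yA)"
      using adj_sym by blast
    then show ?thesis using E eA by blast
  next
    case 3
    have E: "Eo t0 t = {xB,yB}" "Eo t t0 = {zB,wB}" using 3 bpos apos unfolding Eo_def by simp_all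
    have c: "\<beta> = \<beta> \<and> \<bar>int t0 - int t\<bar> = int \<alpha>" using 3 by simp
    have "adjN (lift t0 xB) (lift t zB) \<and> adjN (lift t0 yB) (lift t wB)"
      using cross[OF MB vB assms(1-4)] c by blast
    then show ?thesis using E eB by blast
  next
    case 4
    have E: "Eo t0 t = {zB,wB}" "Eo t t0 = {xB,yB}" using 4 bpos apos unfolding Eo_def by simp_all
    have c: "\<beta> = \<beta> \<and> \<bar>int t - int t0\<bar> = int \<alpha>" using 4 by simp
    have "adjN (lift t xB) (lift t0 zB) \<and> adjN (lift t yB) (lift t0 wB)"
      using cross[OF MB vB assms(3,4,1,2)] c by blast
    then have "adjN (lift t0 zB) (lift t xB) \<and> adjN (lift t0 wB) (lift t yB)"
      using adj_sym by blast
    then show ?thesis using E eB by blast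
  qed
qed

lemma Inv_base: "1 \<le> t \<Longrightarrow> t \<le> k \<Longrightarrow> Inv {t} (L t)"
  unfolding Inv_def
proof (intro conjI)
  assume t: "1 \<le> t" "t \<le> k"
  show "L t \<noteq> []" "set (L t) = (\<Union>t\<in>{t}. lift t ` set cs)" "distinct (L t)"
    using L_props[of t] by simp_all
  show "3 \<le> length (L t)" using L_props(4)[of t] cs_props(4) by simp
  show "\<forall>a b. {a, b} \<in> ce (L t) \<longrightarrow> adjN a b" using L_good[OF t] by blast
  show "\<forall>s\<in>{t}. \<forall>e\<in>ce cs. (\<forall>t'\<in>{t}. e \<noteq> Eo s t') \<longrightarrow> lift s ` e \<in> ce (L t)"
    using L_props(5)[of t] by simp
qed

lemma Inv_step:
  assumes I: "Inv T C" and T: "T \<subseteq> {1..k}" and t0: "t0 \<in> T" and t: "t \<notin> T" "1 \<le> t" "t \<le> k"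
    and d: "int t - int t0 \<in> {int \<beta>, - int \<beta>, int \<alpha>, - int \<alpha>}"
  shows "\<exists>C'. Inv (insert t T) C'"
proof -
  have t0k: "1 \<le> t0" "t0 \<le> k" using T t0 by auto
  obtain p q u v where P: "Eo t0 t = {p,q}" "Eo t t0 = {u,v}" "{p,q} \<in> ce cs" "{u,v} \<in> ce cs"
     "adjN (lift t0 p) (lift t u)" "adjN (lift t0 q) (lift t v)"
    using partner[OF t0k t(2,3) d] by blast
  have I': "C \<noteq> []" "set C = (\<Union>t\<in>T. lift t ` set cs)" "distinct C" "3 \<le> length C"
    "\<forall>a b. {a,b} \<in> ce C \<longrightarrow> adjN a b"
    "\<forall>s\<in>T. \<forall>e\<in>ce cs. (\<forall>t'\<in>T. e \<noteq> Eo s t') \<longrightarrow> lift s ` e \<in> ce C"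
    using I unfolding Inv_def by blast+
  have "\<forall>t'\<in>T. {p,q} \<noteq> Eo t0 t'"
  proof
    fix t' assume "t' \<in> T"
    show "{p,q} \<noteq> Eo t0 t'"
    proof
      assume "{p,q} = Eo t0 t'"
      then have "t = t'" using Eo_inj[of t0 t t'] P(1) by auto
      then show False using \<open>t' \<in> T\<close> t by simp
    qed
  qed
  then have "lift t0 ` {p,q} \<in> ce C" using I'(6) t0 P(3) by blast
  then have in1: "{lift t0 p, lift t0 q} \<in> ce C" by simp
  have "lift t ` {u,v} \<in> ce (L t)" using L_props(5)[of t] P(4) by blast
  then have in2: "{lift t u, lift t v} \<in> ce (L t)" by simp
  have gL: "\<forall>a b. {a,b} \<in> ce (L t) \<longrightarrow> adjN a b" using L_good[OF t(2,3)] by blast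
  have "\<exists>C'. set C' = set C \<union> set (L t) \<and> length C' = length C + length (L t)
     \<and> distinct C' = (distinct C \<and> distinct (L t) \<and> set C \<inter> set (L t) = {})
     \<and> (\<forall>a b. {a,b} \<in> ce C' \<longrightarrow> adjN a b)
     \<and> ce C \<union> ce (L t) - {{lift t0 p, lift t0 q},{lift t u, lift t v}} \<subseteq> ce C'"
    by (rule merge[of adjN, OF adj_sym I'(1) L_props(1) in1 in2 P(5,6) I'(5) gL])
  then obtain C' where C': "set C' = set C \<union> set (L t)" "length C' = length C + length (L t)"
     "distinct C' = (distinct C \<and> distinct (L t) \<and> set C \<inter> set (L t) = {})"
     "\<forall>a b. {a,b} \<in> ce C' \<longrightarrow> adjN a b"
     "ce C \<union> ce (L t) - {{lift t0 p, lift t0 q},{lift t u, lift t v}} \<subseteq> ce C'"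
    by blast
  have disj: "set C \<inter> set (L t) = {}" using I'(2) L_props(2) t(1) by auto
  have "Inv (insert t T) C'"
    unfolding Inv_def
  proof (intro conjI)
    show "C' \<noteq> []" using C'(2) I'(4) by auto
    show "set C' = (\<Union>t\<in>insert t T. lift t ` set cs)" using C'(1) I'(2) L_props(2)[of t] by (simp add: Un_commute)
    show "distinct C'" using C'(3) I'(3) L_props(3) disj by simp
    show "3 \<le> length C'" using C'(2) I'(4) by simp
    show "\<forall>a b. {a,b} \<in> ce C' \<longrightarrow> adjN a b" by (rule C'(4))
    show "\<forall>s\<in>insert t T. \<forall>e\<in>ce cs. (\<forall>t'\<in>insert t T. e \<noteq> Eo s t') \<longrightarrow> lift s ` e \<in> ce C'"
    proof (intro ballI impI)
      fix s e assume s: "s \<in> insert t T" and e: "e \<in> ce cs" and H: "\<forall>t'\<in>insert t T. e \<noteq> Eo s t'"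
      have ne: "e \<noteq> {}" using ce_ne e by blast
      have n1: "lift s ` e \<noteq> {lift t0 p, lift t0 q}"
      proof
        assume "lift s ` e = {lift t0 p, lift t0 q}"
        then have "lift s ` e = lift t0 ` {p,q}" by simp
        then have "s = t0 \<and> e = {p,q}" using lift_img_eq ne by blast
        then show False using H P(1) by auto
      qed
      have n2: "lift s ` e \<noteq> {lift t u, lift t v}"
      proof
        assume "lift s ` e = {lift t u, lift t v}"
        then have "lift s ` e = lift t ` {u,v}" by simp
        then have "s = t \<and> e = {u,v}" using lift_img_eq ne by blast
        then show False using H P(2) t0 by auto
      qed
      have "lift s ` e \<in> ce C \<union> ce (L t)"
      proof (cases "s = t")
        case True then show ?thesis using L_props(5)[of t] e by auto
      next
        case False
        then have "s \<in> T" using s by simp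
        then show ?thesis using I'(6) e H by auto
      qed
      then show "lift s ` e \<in> ce C'" using C'(5) n1 n2 by blast
    qed
  qed
  then show ?thesis by blast
qed

lemma Inv_reach: "reach \<alpha> \<beta> k T \<Longrightarrow> \<exists>C. Inv T C"
proof (induction rule: reach.induct)
  case (single t) then show ?case using Inv_base by blast
next
  case (add T t0 t)
  then obtain C where "Inv T C" by blast
  then show ?case using Inv_step[OF _ reach_sub[OF add.hyps(1)] add.hyps(2-6)] by blast
qed

lemma board_split: "board (ns @ [k]) = (\<Union>t\<in>{1..k}. lift t ` board ns)"
proof
  show "board (ns @ [k]) \<subseteq> (\<Union>t\<in>{1..k}. lift t ` board ns)"
  proof
    fix b assume "b \<in> board (ns @ [k])"
    then obtain a c where ac: "b = a @ [c]" "a \<in> board ns" "1 \<le> c" "c \<le> int k"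
      using board_snoc by blast
    then have "b = lift (nat c) a" "nat c \<in> {1..k}" by (auto simp: lift_def)
    then show "b \<in> (\<Union>t\<in>{1..k}. lift t ` board ns)" using ac by blast
  qed
  show "(\<Union>t\<in>{1..k}. lift t ` board ns) \<subseteq> board (ns @ [k])"
    by (auto simp: lift_def board_app)
qed

lemma Inv_ham: "Inv {1..k} C \<Longrightarrow> ham_cycle \<alpha> \<beta> (ns @ [k]) C"
proof -
  assume I: "Inv {1..k} C"
  then have I': "C \<noteq> []" "set C = (\<Union>t\<in>{1..k}. lift t ` set cs)" "distinct C" "3 \<le> length C"
    "\<forall>a b. {a,b} \<in> ce C \<longrightarrow> adjN a b"
    unfolding Inv_def by blast+
  show ?thesis unfolding ham_cycle_def
  proof (intro conjI allI impI)
    show "3 \<le> length C" "distinct C" by (fact I'(4), fact I'(3))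
    show "set C = board (ns @ [k])" using I'(2) board_split cs_props(2) by simp
    fix i assume "i < length C"
    then show "adjN (cyc C i) (cyc C (Suc i))" using ce_cyc_in'[OF I'(1)] I'(5) by blast
  qed
qed

lemma M_lift: "M D g x y z w \<Longrightarrow> length x = D \<Longrightarrow> length y = D \<Longrightarrow> length z = D \<Longrightarrow> length w = D \<Longrightarrow>
  M (Suc D) g (lift t x) (lift t y) (lift t z) (lift t w)"
  unfolding M_def lift_def by (auto simp: vdiff_app vscale_app axis_app0)

lemma Inv_site:
  assumes I: "Inv T C" and s: "s \<in> T" and m: "M (length ns) g x y z w"
    and e: "{x,y} \<in> ce cs" "{z,w} \<in> ce cs"
    and ne: "\<forall>t'\<in>T. {x,y} \<noteq> Eo s t' \<and> {z,w} \<noteq> Eo s t'"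
  shows "\<exists>st. is_site g C st \<and> site_support C st = lift s ` {x,y,z,w}"
proof -
  have I': "C \<noteq> []" "set C = (\<Union>t\<in>T. lift t ` set cs)"
    "\<forall>s\<in>T. \<forall>e\<in>ce cs. (\<forall>t'\<in>T. e \<noteq> Eo s t') \<longrightarrow> lift s ` e \<in> ce C"
    using I unfolding Inv_def by blast+
  have v: "x \<in> set cs \<and> y \<in> set cs \<and> z \<in> set cs \<and> w \<in> set cs" using Mlen[OF m e] .
  have n1: "\<forall>t'\<in>T. {x,y} \<noteq> Eo s t'" "\<forall>t'\<in>T. {z,w} \<noteq> Eo s t'" using ne by blast+
  have "lift s ` {x,y} \<in> ce C" using I'(3) s e(1) n1(1) by blast
  then have e1: "{lift s x, lift s y} \<in> ce C" by simp
  have "lift s ` {z,w} \<in> ce C" using I'(3) s e(2) n1(2) by blast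
  then have e2: "{lift s z, lift s w} \<in> ce C" by simp
  have len: "\<forall>a\<in>set C. length a = Suc (length ns)"
  proof
    fix a assume "a \<in> set C"
    then obtain t b where "b \<in> set cs" "a = lift t b" using I'(2) by blast
    then show "length a = Suc (length ns)" using cs_len by (simp add: lift_def)
  qed
  have lv: "length x = length ns" "length y = length ns" "length z = length ns" "length w = length ns"
    using v cs_len by blast+
  have m': "M (Suc (length ns)) g (lift s x) (lift s y) (lift s z) (lift s w)"
    by (rule M_lift[OF m lv])
  show ?thesis using M_to_site[OF I'(1) e1 e2 m' len] by simp
qed

lemma cop_ab:
  assumes npos: "\<forall>i<length ns. ns ! i > 0"
  shows "coprime \<alpha> \<beta>"
proof -
  define g where "g = gcd \<alpha> \<beta>"
  define c0 where "c0 = cyc cs 0"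
  have dv: "\<forall>l<length ns. int g dvd (cyc cs i ! l - c0 ! l)" for i
  proof (induction i)
    case 0 then show ?case by (simp add: c0_def)
  next
    case (Suc i)
    show ?case
    proof (intro allI impI)
      fix l assume l: "l < length ns"
      have a: "adj \<alpha> \<beta> ns (cyc cs i) (cyc cs (Suc i))" by (rule cs_adj_all)
      have len: "length (cyc cs i) = length ns" "length (cyc cs (Suc i)) = length ns"
        using cyc_mem[OF cs_props(1)] cs_len by auto
      have ic: "in_C \<alpha> \<beta> (length ns) (vdiff (cyc cs i) (cyc cs (Suc i)))" using a by (simp add: adj_def)
      have "int g dvd vdiff (cyc cs i) (cyc cs (Suc i)) ! l"
        unfolding g_def by (rule inC_dvd[OF ic l])
      then have "int g dvd (cyc cs i ! l - cyc cs (Suc i) ! l)" using l len by simp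
      moreover have "int g dvd (cyc cs i ! l - c0 ! l)" using Suc l by blast
      ultimately have "int g dvd ((cyc cs i ! l - c0 ! l) - (cyc cs i ! l - cyc cs (Suc i) ! l))"
        using dvd_diff by blast
      then show "int g dvd (cyc cs (Suc i) ! l - c0 ! l)" by simp
    qed
  qed
  have dvb: "int g dvd (a ! l - c0 ! l)" if "a \<in> board ns" "l < length ns" for a l
  proof -
    have "a \<in> set cs" using that(1) cs_props(2) by simp
    then obtain j where j: "j < length cs" "a = cs ! j" by (auto simp: in_set_conv_nth)
    then have "a = cyc cs j" by (simp add: cyc_def)
    then show ?thesis using dv that by blast
  qed
  obtain l0 where l0: "l0 < length ns" "ns ! l0 \<ge> 2"
  proof (rule ccontr)
    assume "\<not> thesis"
    have all1: "\<forall>l<length ns. ns ! l = 1"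
    proof (intro allI impI)
      fix l assume l: "l < length ns"
      have "\<not> 2 \<le> ns ! l" using that l \<open>\<not> thesis\<close> by blast
      moreover have "ns ! l > 0" using npos l by blast
      ultimately show "ns ! l = 1" by linarith
    qed
    have "set cs \<subseteq> {replicate (length ns) 1}"
    proof
      fix a assume "a \<in> set cs"
      then have a: "a \<in> board ns" using cs_props(2) by simp
      have "a = replicate (length ns) 1"
      proof (rule nth_equalityI)
        show "length a = length (replicate (length ns) 1)" using a by (simp add: board_def)
        fix l assume "l < length a"
        then show "a ! l = replicate (length ns) 1 ! l" using a all1 by (auto simp: board_def)
      qed
      then show "a \<in> {replicate (length ns) 1}" by simp
    qed
    then have "card (set cs) \<le> card {replicate (length ns) (1::int)}" by (intro card_mono) auto
    then have "card (set cs) \<le> 1" by simp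
    then show False using cs_props(3,4) by (simp add: distinct_card)
  qed
  define a1 where "a1 = replicate (length ns) (1::int)"
  define a2 where "a2 = a1[l0 := 2]"
  have b1: "a1 \<in> board ns" using npos by (auto simp: board_def a1_def Suc_le_eq)
  have b2: "a2 \<in> board ns" using npos l0 by (auto simp: board_def a2_def a1_def nth_list_update Suc_le_eq)
  have "int g dvd (a2 ! l0 - c0 ! l0) - (a1 ! l0 - c0 ! l0)"
    using dvb[OF b1 l0(1)] dvb[OF b2 l0(1)] by (rule dvd_diff[rotated])
  then have "int g dvd 1" using l0 by (simp add: a1_def a2_def)
  then have "g = 1" by simp
  then show ?thesis by (simp add: g_def coprime_iff_gcd_eq_1)
qed

end

lemma all_less_4: "(\<forall>i<(4::nat). P i) \<longleftrightarrow> P 0 \<and> P 1 \<and> P 2 \<and> P 3"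
  by (auto simp: eval_nat_numeral less_Suc_eq)

lemma disj4: "(let S = [a,b,c,d] in \<forall>i<4. \<forall>j<4. i \<noteq> j \<longrightarrow> S ! i \<inter> S ! j = {}) \<longleftrightarrow>
   a \<inter> b = {} \<and> a \<inter> c = {} \<and> a \<inter> d = {} \<and> b \<inter> c = {} \<and> b \<inter> d = {} \<and> c \<inter> d = {}"
  unfolding Let_def all_less_4 by (auto simp: Int_commute)

context lay
begin

lemma Eo_range: "Eo s t \<in> {{xA,yA},{zA,wA},{xB,yB},{zB,wB},{}}"
  unfolding Eo_def by auto

lemma edge_not_Eo:
  assumes "P \<inter> {xA,yA,zA,wA} = {}" "P \<inter> {xB,yB,zB,wB} = {}" "x \<in> P"
  shows "{x,y} \<noteq> Eo s t"
proof
  assume "{x,y} = Eo s t"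
  then have "x \<in> Eo s t" by auto
  then show False using Eo_range[of s t] assms by auto
qed

lemma lift_disj: "s \<noteq> t \<or> P \<inter> Q = {} \<Longrightarrow> lift s ` P \<inter> lift t ` Q = {}"
  by auto

lemma Eo_11: "Eo 1 1 = {}"
  using apos bpos unfolding Eo_def by simp

end

theorem proposition5p4:
  fixes \<alpha> \<beta> k :: nat and ns :: "nat list"
  assumes "\<alpha> > 0" and "\<beta> > 0"
    and "\<forall>i<length ns. ns ! i > 0"
    and "\<exists>cs. good_ham_cycle \<alpha> \<beta> ns cs"
    and "int k \<ge> int \<alpha> + int \<beta> - 1"
  shows "\<exists>cs. good_ham_cycle \<alpha> \<beta> (ns @ [k]) cs"
proof -
  obtain cs where g: "good_ham_cycle \<alpha> \<beta> ns cs" using assms(4) by blast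
  have ham: "ham_cycle \<alpha> \<beta> ns cs" using g by (simp add: good_ham_cycle_def)
  obtain s1 s2 s3 s4 where ss: "is_site \<alpha> cs s1" "is_site \<alpha> cs s2" "is_site \<beta> cs s3" "is_site \<beta> cs s4"
    and D: "let S = [site_support cs s1, site_support cs s2, site_support cs s3, site_support cs s4]
         in \<forall>i<4. \<forall>j<4. i \<noteq> j \<longrightarrow> S ! i \<inter> S ! j = {}"
    using g unfolding good_ham_cycle_def by blast
  have D': "site_support cs s1 \<inter> site_support cs s2 = {}" "site_support cs s1 \<inter> site_support cs s3 = {}"
    "site_support cs s1 \<inter> site_support cs s4 = {}" "site_support cs s2 \<inter> site_support cs s3 = {}"
    "site_support cs s2 \<inter> site_support cs s4 = {}" "site_support cs s3 \<inter> site_support cs s4 = {}"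
    using D unfolding disj4 by blast+
  have ne: "cs \<noteq> []" using ham by (auto simp: ham_cycle_def)
  have len: "\<forall>a\<in>set cs. length a = length ns" using ham board_len by (auto simp: ham_cycle_def)
  obtain xA yA zA wA where A: "{xA,yA} \<in> ce cs" "{zA,wA} \<in> ce cs" "M (length ns) \<alpha> xA yA zA wA"
    "site_support cs s1 = {xA,yA,zA,wA}" using site_to_M[OF ss(1) ne len] by blast
  obtain xA' yA' zA' wA' where A': "{xA',yA'} \<in> ce cs" "{zA',wA'} \<in> ce cs" "M (length ns) \<alpha> xA' yA' zA' wA'"
    "site_support cs s2 = {xA',yA',zA',wA'}" using site_to_M[OF ss(2) ne len] by blast
  obtain xB yB zB wB where B: "{xB,yB} \<in> ce cs" "{zB,wB} \<in> ce cs" "M (length ns) \<beta> xB yB zB wB"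
    "site_support cs s3 = {xB,yB,zB,wB}" using site_to_M[OF ss(3) ne len] by blast
  obtain xB' yB' zB' wB' where B': "{xB',yB'} \<in> ce cs" "{zB',wB'} \<in> ce cs" "M (length ns) \<beta> xB' yB' zB' wB'"
    "site_support cs s4 = {xB',yB',zB',wB'}" using site_to_M[OF ss(4) ne len] by blast
  interpret lay \<alpha> \<beta> k ns cs xA yA zA wA xB yB zB wB
    by unfold_locales (use assms(1,2) ham A B D'(2) in auto)
  have cop: "coprime \<alpha> \<beta>" by (rule cop_ab[OF assms(3)])
  have kk: "\<alpha> + \<beta> - 1 \<le> k" using assms(5) by linarith
  obtain C where I: "Inv {1..k} C" using Inv_reach[OF reach_all[OF assms(1,2) cop kk]] by blast
  have hamC: "ham_cycle \<alpha> \<beta> (ns @ [k]) C" by (rule Inv_ham[OF I])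
  have k1: "1 \<le> k" using kk assms(1,2) by linarith
  have nA': "\<forall>s t. {xA',yA'} \<noteq> Eo s t \<and> {zA',wA'} \<noteq> Eo s t"
    using edge_not_Eo[of "{xA',yA',zA',wA'}"] D'(1,4) A(4) A'(4) B(4) by (auto simp: Int_commute)
  have nB': "\<forall>s t. {xB',yB'} \<noteq> Eo s t \<and> {zB',wB'} \<noteq> Eo s t"
    using edge_not_Eo[of "{xB',yB',zB',wB'}"] D'(3,6) A(4) B(4) B'(4) by (auto simp: Int_commute)
  have SA: "{xA,yA,zA,wA} \<inter> {xA',yA',zA',wA'} = {}" using D'(1) unfolding A(4) A'(4) .
  have SAB: "{xA,yA,zA,wA} \<inter> {xB,yB,zB,wB} = {}" using D'(2) unfolding A(4) B(4) .
  have SAB': "{xA,yA,zA,wA} \<inter> {xB',yB',zB',wB'} = {}" using D'(3) unfolding A(4) B'(4) .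
  have SA'B: "{xA',yA',zA',wA'} \<inter> {xB,yB,zB,wB} = {}" using D'(4) unfolding A'(4) B(4) .
  have SA'B': "{xA',yA',zA',wA'} \<inter> {xB',yB',zB',wB'} = {}" using D'(5) unfolding A'(4) B'(4) .
  have SBB': "{xB,yB,zB,wB} \<inter> {xB',yB',zB',wB'} = {}" using D'(6) unfolding B(4) B'(4) .
  have 12: "(1::nat) \<noteq> 2" by simp
  have 21: "(2::nat) \<noteq> 1" by simp
  show ?thesis
  proof (cases "k = 1")
    case True
    have T: "{1..k} = {1::nat}" using True by simp
    have I1: "Inv {1} C" using I by (simp only: T)
    have one: "(1::nat) \<in> {1}" by simp
    have nE: "\<forall>t'\<in>{1::nat}. e \<noteq> Eo 1 t' \<and> e' \<noteq> Eo 1 t'" if "e \<in> ce cs" "e' \<in> ce cs" for e e'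
      using Eo_11 ce_ne[OF that(1)] ce_ne[OF that(2)] by simp
    obtain st1 where st1: "is_site \<alpha> C st1" "site_support C st1 = lift 1 ` {xA,yA,zA,wA}"
      using Inv_site[OF I1 one A(3) A(1,2) nE[OF A(1,2)]] by blast
    obtain st2 where st2: "is_site \<alpha> C st2" "site_support C st2 = lift 1 ` {xA',yA',zA',wA'}"
      using Inv_site[OF I1 one A'(3) A'(1,2) nE[OF A'(1,2)]] by blast
    obtain st3 where st3: "is_site \<beta> C st3" "site_support C st3 = lift 1 ` {xB,yB,zB,wB}"
      using Inv_site[OF I1 one B(3) B(1,2) nE[OF B(1,2)]] by blast
    obtain st4 where st4: "is_site \<beta> C st4" "site_support C st4 = lift 1 ` {xB',yB',zB',wB'}"
      using Inv_site[OF I1 one B'(3) B'(1,2) nE[OF B'(1,2)]] by blast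
    have d: "site_support C st1 \<inter> site_support C st2 = {}" "site_support C st1 \<inter> site_support C st3 = {}"
      "site_support C st1 \<inter> site_support C st4 = {}" "site_support C st2 \<inter> site_support C st3 = {}"
      "site_support C st2 \<inter> site_support C st4 = {}" "site_support C st3 \<inter> site_support C st4 = {}"
      unfolding st1(2) st2(2) st3(2) st4(2)
      using lift_disj[OF disjI2[OF SA]] lift_disj[OF disjI2[OF SAB]] lift_disj[OF disjI2[OF SAB']]
        lift_disj[OF disjI2[OF SA'B]] lift_disj[OF disjI2[OF SA'B']] lift_disj[OF disjI2[OF SBB']]
      by simp_all
    have "good_ham_cycle \<alpha> \<beta> (ns @ [k]) C"
      unfolding good_ham_cycle_def disj4
      using hamC st1(1) st2(1) st3(1) st4(1) d by blast
    then show ?thesis by blast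
  next
    case False
    then have k2: "2 \<le> k" using k1 by simp
    have m1: "(1::nat) \<in> {1..k}" "(2::nat) \<in> {1..k}" using k1 k2 by auto
    have nA1: "\<forall>t'\<in>{1..k}. {xA',yA'} \<noteq> Eo s t' \<and> {zA',wA'} \<noteq> Eo s t'" for s using nA' by blast
    have nB1: "\<forall>t'\<in>{1..k}. {xB',yB'} \<noteq> Eo s t' \<and> {zB',wB'} \<noteq> Eo s t'" for s using nB' by blast
    obtain st1 where st1: "is_site \<alpha> C st1" "site_support C st1 = lift 1 ` {xA',yA',zA',wA'}"
      using Inv_site[OF I m1(1) A'(3) A'(1,2) nA1] by blast
    obtain st2 where st2: "is_site \<alpha> C st2" "site_support C st2 = lift 2 ` {xA',yA',zA',wA'}"
      using Inv_site[OF I m1(2) A'(3) A'(1,2) nA1] by blast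
    obtain st3 where st3: "is_site \<beta> C st3" "site_support C st3 = lift 1 ` {xB',yB',zB',wB'}"
      using Inv_site[OF I m1(1) B'(3) B'(1,2) nB1] by blast
    obtain st4 where st4: "is_site \<beta> C st4" "site_support C st4 = lift 2 ` {xB',yB',zB',wB'}"
      using Inv_site[OF I m1(2) B'(3) B'(1,2) nB1] by blast
    have d: "site_support C st1 \<inter> site_support C st2 = {}" "site_support C st1 \<inter> site_support C st3 = {}"
      "site_support C st1 \<inter> site_support C st4 = {}" "site_support C st2 \<inter> site_support C st3 = {}"
      "site_support C st2 \<inter> site_support C st4 = {}" "site_support C st3 \<inter> site_support C st4 = {}"
      unfolding st1(2) st2(2) st3(2) st4(2)
      using lift_disj[OF disjI1[OF 12]] lift_disj[OF disjI2[OF SA'B']] lift_disj[OF disjI1[OF 21]]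
        lift_disj[OF disjI2[OF SA'B']]
      by simp_all
    have "good_ham_cycle \<alpha> \<beta> (ns @ [k]) C"
      unfolding good_ham_cycle_def disj4
      using hamC st1(1) st2(1) st3(1) st4(1) d by blast
    then show ?thesis by blast
  qed
qed

end
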